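(* Let $N\ge 0$ be an integer and let $a,b,c,z$ be complex numbers (or indeterminates) with $z\neq 0$, such that all denominators below are nonzero. Then \[ {}_{2}F_{1}^{[N]}\left(\begin{matrix}a,b\\ c\end{matrix};z\right) =\frac{(a)_{N} (c-a)_{N}}{(c)_{N}\, N!} \sum_{n=0}^{N}\frac{(1+n)_{N-n}}{(a+n)_{N-n}}\,\frac{(1+N-n)_{n}}{(c-a+N-n)_{n}}\, \frac{(b+Nz^{-1}-n)_{n}}{(Nz^{-1}-n)_{n}}. \]
   Context: For a number $x$ and an integer $m\ge 0$, $(x)_m=x(x+1)\cdots(x+m-1)$ denotes the rising factorial, with $(x)_0=1$. For an integer $N\ge 0$ the truncated hypergeometric function is defined by \[ {}_{2}F_{1}^{[N]}\left(\begin{matrix}a,b\\ c\end{matrix};z\right)=\sum_{m=0}^{N}\frac{(a)_m(b)_m}{(c)_m\, m!}\,\frac{(N+1-m)_m}{(Nz^{-1}-m)_m}. \] *)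

theory Defs
  imports "HOL-Analysis.Analysis"
begin

definition trunc_hyp2F1 :: "nat \<Rightarrow> complex \<Rightarrow> complex \<Rightarrow> complex \<Rightarrow> complex \<Rightarrow> complex" where
  "trunc_hyp2F1 N a b c z =
     (\<Sum>m = 0..N. pochhammer a m * pochhammer b m / (pochhammer c m * fact m)
        * (pochhammer (of_nat (N + 1 - m)) m / pochhammer (of_nat N / z - of_nat m) m))"

end

theory Submission imports Defs begin

lemma coef_id:
  fixes a d :: "'a::comm_ring_1"
  assumes "k \<le> N"
  shows "(\<Sum>n=0..N. of_nat (N choose n) * of_nat (n choose k) * pochhammer a n * pochhammer d (N-n))
     = of_nat (N choose k) * pochhammer a k * pochhammer (a + of_nat k + d) (N-k)"
proof -
  let ?f = "\<lambda>n. of_nat (N choose n) * of_nat (n choose k) * pochhammer a n * pochhammer d (N-n) :: 'a"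
  have split: "{0..N} = {0..<k} \<union> {k..N}" using assms by auto
  have "(\<Sum>n=0..N. ?f n) = (\<Sum>n\<in>{0..<k}. ?f n) + (\<Sum>n=k..N. ?f n)"
    unfolding split by (rule sum.union_disjoint) auto
  also have "(\<Sum>n\<in>{0..<k}. ?f n) = 0" by (rule sum.neutral) (auto simp: binomial_eq_0)
  also have "(\<Sum>n=k..N. ?f n) = (\<Sum>n=0+k..(N-k)+k. ?f n)" using assms by simp
  also have "\<dots> = (\<Sum>j=0..N-k. ?f (j+k))" by (rule sum.shift_bounds_cl_nat_ivl)
  also have "\<dots> = (\<Sum>j=0..N-k. of_nat (N choose k) * pochhammer a k *
        (of_nat ((N-k) choose j) * pochhammer (a + of_nat k) j * pochhammer d (N-k-j)))"
  proof (rule sum.cong[OF refl])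
    fix j assume j: "j \<in> {0..N-k}"
    have c: "(N choose (j+k)) * ((j+k) choose k) = (N choose k) * ((N-k) choose j)"
      using choose_mult[of k "j+k" N] j assms by auto
    have c': "(of_nat (N choose (j+k)) :: 'a) * of_nat ((j+k) choose k) = of_nat (N choose k) * of_nat ((N-k) choose j)"
      by (metis c of_nat_mult)
    have p: "pochhammer a (j+k) = pochhammer a k * pochhammer (a + of_nat k) j"
      using pochhammer_product'[of a k j] by (simp add: add.commute)
    have e: "N - (j+k) = N-k-j" by simp
    show "?f (j+k) = of_nat (N choose k) * pochhammer a k *
        (of_nat ((N-k) choose j) * pochhammer (a + of_nat k) j * pochhammer d (N-k-j))"
      unfolding p e using c' by (simp add: algebra_simps)
  qed
  also have "\<dots> = of_nat (N choose k) * pochhammer a k * pochhammer (a + of_nat k + d) (N-k)"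
    by (simp add: sum_distrib_left[symmetric] pochhammer_binomial_sum atLeast0AtMost)
  finally show ?thesis by simp
qed

lemma Q_id:
  fixes b w :: complex
  assumes nz: "pochhammer (w - of_nat n) n \<noteq> 0"
  shows "pochhammer (b + w - of_nat n) n / pochhammer (w - of_nat n) n
       = (\<Sum>k=0..n. of_nat (n choose k) * (pochhammer b k / pochhammer (w - of_nat k) k))"
proof -
  have "pochhammer (b + w - of_nat n) n = (\<Sum>k\<le>n. of_nat (n choose k) * pochhammer b k * pochhammer (w - of_nat n) (n - k))"
    using pochhammer_binomial_sum[of b "w - of_nat n" n] by (simp add: algebra_simps)
  hence "pochhammer (b + w - of_nat n) n / pochhammer (w - of_nat n) n
     = (\<Sum>k\<le>n. of_nat (n choose k) * pochhammer b k * pochhammer (w - of_nat n) (n - k) / pochhammer (w - of_nat n) n)"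
    by (simp add: sum_divide_distrib)
  also have "\<dots> = (\<Sum>k\<le>n. of_nat (n choose k) * (pochhammer b k / pochhammer (w - of_nat k) k))"
  proof (rule sum.cong[OF refl])
    fix k assume k: "k \<in> {..n}"
    have e: "w - of_nat n + of_nat (n - k) = w - of_nat k" using k by (simp add: of_nat_diff)
    have p: "pochhammer (w - of_nat n) n = pochhammer (w - of_nat n) (n-k) * pochhammer (w - of_nat k) k"
      using pochhammer_product[of "n-k" n "w - of_nat n"] k e by simp
    have n1: "pochhammer (w - of_nat n) (n-k) \<noteq> 0" and n2: "pochhammer (w - of_nat k) k \<noteq> 0"
      using nz p by auto
    show "of_nat (n choose k) * pochhammer b k * pochhammer (w - of_nat n) (n - k) / pochhammer (w - of_nat n) n
       = of_nat (n choose k) * (pochhammer b k / pochhammer (w - of_nat k) k)"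
      unfolding p using n1 n2 by (simp add: field_simps)
  qed
  finally show ?thesis by (simp add: atLeast0AtMost)
qed

lemma poch_fact_ratio:
  assumes "m \<le> N"
  shows "pochhammer (of_nat (N + 1 - m) :: complex) m = fact N / fact (N - m)"
proof -
  have "(fact N :: complex) = pochhammer 1 (N - m) * pochhammer (1 + of_nat (N - m)) m"
    using pochhammer_product[of "N-m" N "1::complex"] assms by (simp add: pochhammer_fact add.commute)
  moreover have "(of_nat (N + 1 - m) :: complex) = 1 + of_nat (N - m)" using assms by (simp add: of_nat_diff)
  ultimately show ?thesis by (simp add: pochhammer_fact[symmetric] field_simps)
qed

lemma poch_fact_ratio2:
  assumes "n \<le> N"
  shows "pochhammer (1 + of_nat n :: complex) (N - n) = fact N / fact n"
proof -
  have "(fact N :: complex) = pochhammer 1 n * pochhammer (1 + of_nat n) (N - n)"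
    using pochhammer_product[of n N "1::complex"] assms by (simp add: pochhammer_fact add.commute)
  thus ?thesis by (simp add: pochhammer_fact[symmetric] field_simps)
qed


theorem theorem3p4:
  fixes N :: nat and a b c z :: complex
  assumes hz: "z \<noteq> 0"
    and hc: "\<And>m. m \<le> N \<Longrightarrow> pochhammer c m \<noteq> 0"
    and hzd: "\<And>m. m \<le> N \<Longrightarrow> pochhammer (of_nat N / z - of_nat m) m \<noteq> 0"
    and ha: "\<And>n. n \<le> N \<Longrightarrow> pochhammer (a + of_nat n) (N - n) \<noteq> 0"
    and hca: "\<And>n. n \<le> N \<Longrightarrow> pochhammer (c - a + of_nat (N - n)) n \<noteq> 0"
  shows "trunc_hyp2F1 N a b c z =
    pochhammer a N * pochhammer (c - a) N / (pochhammer c N * fact N) *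
    (\<Sum>n = 0..N. pochhammer (1 + of_nat n) (N - n) / pochhammer (a + of_nat n) (N - n)
       * (pochhammer (1 + of_nat (N - n)) n / pochhammer (c - a + of_nat (N - n)) n)
       * (pochhammer (b + of_nat N / z - of_nat n) n / pochhammer (of_nat N / z - of_nat n) n))"
proof -
  define w where "w = of_nat N / z"
  define T where "T k = pochhammer b k / pochhammer (w - of_nat k) k" for k
  have haN: "pochhammer a N \<noteq> 0" using ha[of 0] by simp
  have hcaN: "pochhammer (c - a) N \<noteq> 0" using hca[of N] by simp
  have hcN: "pochhammer c N \<noteq> 0" using hc by simp
  have L: "trunc_hyp2F1 N a b c z = (\<Sum>m=0..N. of_nat (N choose m) * pochhammer a m / pochhammer c m * T m)"
    unfolding trunc_hyp2F1_def
  proof (rule sum.cong[OF refl])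
    fix m assume m: "m \<in> {0..N}"
    have mN: "m \<le> N" using m by auto
    have n1: "pochhammer c m \<noteq> 0" using hc m by auto
    have n2: "pochhammer (w - of_nat m) m \<noteq> 0" using hzd m unfolding w_def by auto
    show "pochhammer a m * pochhammer b m / (pochhammer c m * fact m) *
        (pochhammer (of_nat (N + 1 - m)) m / pochhammer (of_nat N / z - of_nat m) m) =
        of_nat (N choose m) * pochhammer a m / pochhammer c m * T m"
      using m n1 n2 unfolding T_def w_def[symmetric] poch_fact_ratio[of m N, OF mN] binomial_fact[OF mN]
      by (simp add: field_simps)
  qed
  have R1: "pochhammer a N * pochhammer (c - a) N / (pochhammer c N * fact N) *
    (\<Sum>n = 0..N. pochhammer (1 + of_nat n) (N - n) / pochhammer (a + of_nat n) (N - n)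
       * (pochhammer (1 + of_nat (N - n)) n / pochhammer (c - a + of_nat (N - n)) n)
       * (pochhammer (b + of_nat N / z - of_nat n) n / pochhammer (of_nat N / z - of_nat n) n))
    = (\<Sum>n = 0..N. (\<Sum>k=0..N. of_nat (N choose n) * of_nat (n choose k) * pochhammer a n * pochhammer (c - a) (N - n) * T k)) / pochhammer c N"
    unfolding sum_distrib_left
    apply (subst sum_divide_distrib)
  proof (rule sum.cong[OF refl])
    fix n assume n: "n \<in> {0..N}"
    have pa: "pochhammer a N = pochhammer a n * pochhammer (a + of_nat n) (N - n)"
      using pochhammer_product[of n N a] n by simp
    have pca: "pochhammer (c - a) N = pochhammer (c - a) (N - n) * pochhammer (c - a + of_nat (N - n)) n"
      using pochhammer_product[of "N - n" N "c - a"] n by simp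
    have n1: "pochhammer (a + of_nat n) (N - n) \<noteq> 0" using ha n by auto
    have n2: "pochhammer (c - a + of_nat (N - n)) n \<noteq> 0" using hca n by auto
    have n3: "pochhammer (w - of_nat n) n \<noteq> 0" using hzd n unfolding w_def by auto
    have Q: "pochhammer (b + w - of_nat n) n / pochhammer (w - of_nat n) n = (\<Sum>k=0..N. of_nat (n choose k) * T k)"
    proof -
      have "(\<Sum>k=0..N. of_nat (n choose k) * T k) = (\<Sum>k=0..n. of_nat (n choose k) * T k)"
        using n by (intro sum.mono_neutral_right) (auto simp: binomial_eq_0)
      thus ?thesis using Q_id[OF n3, of b] unfolding T_def by simp
    qed
    have bw: "b + of_nat N / z - of_nat n = b + w - of_nat n" unfolding w_def by simp
    have fr1: "pochhammer (1 + of_nat n :: complex) (N - n) = fact N / fact n" using poch_fact_ratio2 n by auto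
    have fr2: "pochhammer (1 + of_nat (N - n) :: complex) n = fact N / fact (N - n)"
      using poch_fact_ratio2[of "N - n" N] n by auto
    have bf: "(of_nat (N choose n) :: complex) = fact N / (fact n * fact (N - n))" using binomial_fact n by auto
    show "pochhammer a N * pochhammer (c - a) N / (pochhammer c N * fact N) *
        (pochhammer (1 + of_nat n) (N - n) / pochhammer (a + of_nat n) (N - n) *
         (pochhammer (1 + of_nat (N - n)) n / pochhammer (c - a + of_nat (N - n)) n) *
         (pochhammer (b + of_nat N / z - of_nat n) n / pochhammer (of_nat N / z - of_nat n) n)) =
        (\<Sum>k = 0..N. of_nat (N choose n) * of_nat (n choose k) * pochhammer a n * pochhammer (c - a) (N - n) * T k) / pochhammer c N"
    proof -
      have "(\<Sum>k = 0..N. of_nat (N choose n) * of_nat (n choose k) * pochhammer a n * pochhammer (c - a) (N - n) * T k)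
          = of_nat (N choose n) * pochhammer a n * pochhammer (c - a) (N - n) * (\<Sum>k=0..N. of_nat (n choose k) * T k)"
        by (simp add: sum_distrib_left mult_ac)
      also have "\<dots> = of_nat (N choose n) * pochhammer a n * pochhammer (c - a) (N - n) *
           (pochhammer (b + w - of_nat n) n / pochhammer (w - of_nat n) n)" using Q by simp
      finally have E: "(\<Sum>k = 0..N. of_nat (N choose n) * of_nat (n choose k) * pochhammer a n * pochhammer (c - a) (N - n) * T k)
          = of_nat (N choose n) * pochhammer a n * pochhammer (c - a) (N - n) *
           (pochhammer (b + w - of_nat n) n / pochhammer (w - of_nat n) n)" .
      show ?thesis unfolding E unfolding bw w_def[symmetric] pa pca fr1 fr2 bf
        using n1 n2 n3 hcN by (simp add: field_simps)
    qed
  qed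
  have R2: "(\<Sum>n = 0..N. (\<Sum>k=0..N. of_nat (N choose n) * of_nat (n choose k) * pochhammer a n * pochhammer (c - a) (N - n) * T k))
     = (\<Sum>k=0..N. of_nat (N choose k) * pochhammer a k * pochhammer (c + of_nat k) (N - k) * T k)"
    apply (subst sum.swap)
    apply (rule sum.cong[OF refl])
    apply (subst sum_distrib_right[symmetric])
    apply (subst coef_id)
    apply (auto simp: algebra_simps)
    done
  have R3: "(\<Sum>k=0..N. of_nat (N choose k) * pochhammer a k * pochhammer (c + of_nat k) (N - k) * T k) / pochhammer c N
     = (\<Sum>m=0..N. of_nat (N choose m) * pochhammer a m / pochhammer c m * T m)"
    unfolding sum_divide_distrib
  proof (rule sum.cong[OF refl])
    fix k assume k: "k \<in> {0..N}"
    have p: "pochhammer c N = pochhammer c k * pochhammer (c + of_nat k) (N - k)"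
      using pochhammer_product[of k N c] k by simp
    have "pochhammer c k \<noteq> 0" "pochhammer (c + of_nat k) (N - k) \<noteq> 0" using hcN p by auto
    thus "of_nat (N choose k) * pochhammer a k * pochhammer (c + of_nat k) (N - k) * T k / pochhammer c N =
         of_nat (N choose k) * pochhammer a k / pochhammer c k * T k"
      unfolding p by (simp add: field_simps)
  qed
  show ?thesis unfolding L R1 R2 R3 ..
qed

end
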